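(* Let $G$ be a finite group and let $H,K$ be distinct subgroups of $G$. Then there is a simple $\mathbb CG$-module $W$ such that the space $W^H$ of $H$-invariants and the space $W^K$ of $K$-invariants are distinct. *)

theory Defs
  imports "HOL-Algebra.Group" "Jordan_Normal_Form.Matrix"
begin

text \<open>A finite-dimensional complex representation of a group G on the space of
column vectors of dimension n (every finite-dimensional CG-module is isomorphic
to one of these), given by a homomorphism from G into n x n complex matrices.\<close>
definition is_rep :: "('g, 'b) monoid_scheme \<Rightarrow> nat \<Rightarrow> ('g \<Rightarrow> complex mat) \<Rightarrow> bool" where
  "is_rep G n \<rho> \<longleftrightarrow>
     (\<forall>g\<in>carrier G. \<rho> g \<in> carrier_mat n n) \<and>
     \<rho> \<one>\<^bsub>G\<^esub> = 1\<^sub>m n \<and>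
     (\<forall>g\<in>carrier G. \<forall>h\<in>carrier G. \<rho> (g \<otimes>\<^bsub>G\<^esub> h) = \<rho> g * \<rho> h)"

definition cvec_subspace :: "nat \<Rightarrow> complex vec set \<Rightarrow> bool" where
  "cvec_subspace n S \<longleftrightarrow> S \<subseteq> carrier_vec n \<and> 0\<^sub>v n \<in> S \<and>
     (\<forall>v\<in>S. \<forall>w\<in>S. v + w \<in> S) \<and> (\<forall>c. \<forall>v\<in>S. c \<cdot>\<^sub>v v \<in> S)"

definition G_stable :: "('g, 'b) monoid_scheme \<Rightarrow> ('g \<Rightarrow> complex mat) \<Rightarrow> complex vec set \<Rightarrow> bool" where
  "G_stable G \<rho> S \<longleftrightarrow> (\<forall>g\<in>carrier G. \<forall>v\<in>S. \<rho> g *\<^sub>v v \<in> S)"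

definition simple_rep :: "('g, 'b) monoid_scheme \<Rightarrow> nat \<Rightarrow> ('g \<Rightarrow> complex mat) \<Rightarrow> bool" where
  "simple_rep G n \<rho> \<longleftrightarrow> is_rep G n \<rho> \<and> n > 0 \<and>
     (\<forall>S. cvec_subspace n S \<and> G_stable G \<rho> S \<longrightarrow> S = {0\<^sub>v n} \<or> S = carrier_vec n)"

definition fixed_space :: "nat \<Rightarrow> ('g \<Rightarrow> complex mat) \<Rightarrow> 'g set \<Rightarrow> complex vec set" where
  "fixed_space n \<rho> H = {v \<in> carrier_vec n. \<forall>h\<in>H. \<rho> h *\<^sub>v v = v}"

end

theory Submission
  imports Defs "Jordan_Normal_Form.Determinant"
begin
lemma inj_bound:
  fixes B :: "complex mat"
  assumes B: "B \<in> carrier_mat n d"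
    and inj: "\<forall>c\<in>carrier_vec d. B *\<^sub>v c = 0\<^sub>v n \<longrightarrow> c = 0\<^sub>v d"
  shows "d \<le> n"
proof (rule ccontr)
  assume "\<not> d \<le> n"
  hence dn: "n < d" by simp
  define B' where "B' = mat d d (\<lambda>(i,j). if i < n then B $$ (i,j) else 0)"
  have B'c: "B' \<in> carrier_mat d d" unfolding B'_def by simp
  have tc: "transpose_mat B' \<in> carrier_mat d d" using B'c by simp
  have "transpose_mat B' *\<^sub>v unit_vec d (d-1) = 0\<^sub>v d"
    by (rule eq_vecI) (use dn in \<open>auto simp: B'_def mult_mat_vec_def scalar_prod_def unit_vec_def intro!: sum.neutral\<close>)
  moreover have "unit_vec d (d-1) \<noteq> (0\<^sub>v d :: complex vec)"
  proof
    assume "unit_vec d (d-1) = (0\<^sub>v d :: complex vec)"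
    hence "unit_vec d (d-1) $ (d-1) = (0\<^sub>v d :: complex vec) $ (d-1)" by simp
    thus False using dn by simp
  qed
  ultimately have "det (transpose_mat B') = 0"
    using det_0_iff_vec_prod_zero[OF tc] by (meson unit_vec_carrier)
  hence "det B' = 0" using det_transpose[OF B'c] by simp
  then obtain c where c: "c \<in> carrier_vec d" "c \<noteq> 0\<^sub>v d" "B' *\<^sub>v c = 0\<^sub>v d"
    using det_0_iff_vec_prod_zero[OF B'c] by auto
  have "B *\<^sub>v c = 0\<^sub>v n"
  proof (rule eq_vecI)
    fix i assume i: "i < dim_vec (0\<^sub>v n :: complex vec)"
    hence "(B' *\<^sub>v c) $ i = 0" using c dn by simp
    moreover have "(B' *\<^sub>v c) $ i = (B *\<^sub>v c) $ i"
      using i dn B c(1) by (auto simp: B'_def mult_mat_vec_def scalar_prod_def intro!: sum.cong)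
    ultimately show "(B *\<^sub>v c) $ i = (0\<^sub>v n) $ i" using i by simp
  qed (use B in simp)
  thus False using inj c by blast
qed

definition goodB :: "nat \<Rightarrow> complex vec set \<Rightarrow> nat \<Rightarrow> complex mat \<Rightarrow> bool" where
  "goodB n S d B \<longleftrightarrow> B \<in> carrier_mat n d \<and> (\<forall>c\<in>carrier_vec d. B *\<^sub>v c \<in> S) \<and>
     (\<forall>c\<in>carrier_vec d. B *\<^sub>v c = 0\<^sub>v n \<longrightarrow> c = 0\<^sub>v d)"

lemma ext_mult:
  fixes B :: "complex mat"
  assumes B: "B \<in> carrier_mat n d" and s: "s \<in> carrier_vec n" and c2: "c2 \<in> carrier_vec (Suc d)"
  shows "mat n (Suc d) (\<lambda>(i,j). if j < d then B $$ (i,j) else s $ i) *\<^sub>v c2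
     = B *\<^sub>v vec d (\<lambda>i. c2 $ i) + c2 $ d \<cdot>\<^sub>v s"
proof (rule eq_vecI)
  fix i assume "i < dim_vec (B *\<^sub>v vec d (\<lambda>i. c2 $ i) + c2 $ d \<cdot>\<^sub>v s)"
  hence i: "i < n" using B s by simp
  have "(mat n (Suc d) (\<lambda>(i,j). if j < d then B $$ (i,j) else s $ i) *\<^sub>v c2) $ i
      = (\<Sum>j = 0..<Suc d. (if j < d then B $$ (i,j) else s $ i) * c2 $ j)"
    using i c2 by (simp add: mult_mat_vec_def scalar_prod_def row_def)
  also have "\<dots> = (\<Sum>j = 0..<d. B $$ (i,j) * c2 $ j) + s $ i * c2 $ d"
    by (simp add: sum.atLeast0_lessThan_Suc)
  also have "\<dots> = (B *\<^sub>v vec d (\<lambda>i. c2 $ i) + c2 $ d \<cdot>\<^sub>v s) $ i"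
    using i B s by (simp add: mult_mat_vec_def scalar_prod_def row_def)
  finally show "(mat n (Suc d) (\<lambda>(i,j). if j < d then B $$ (i,j) else s $ i) *\<^sub>v c2) $ i
      = (B *\<^sub>v vec d (\<lambda>i. c2 $ i) + c2 $ d \<cdot>\<^sub>v s) $ i" .
qed (use B s in simp)

lemma aux_solve: "(x::complex) + c * s = 0 \<Longrightarrow> c \<noteq> 0 \<Longrightarrow> s = (-1/c) * x"
proof -
  assume h: "x + c * s = 0" and ne: "c \<noteq> 0"
  hence "x = - (c * s)" by (simp add: eq_neg_iff_add_eq_0)
  thus ?thesis using ne by simp
qed

lemma goodB_extend:
  assumes S: "cvec_subspace n S" and g: "goodB n S d B" and s: "s \<in> S"
    and nr: "\<not> (\<exists>c\<in>carrier_vec d. s = B *\<^sub>v c)"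
  shows "goodB n S (Suc d) (mat n (Suc d) (\<lambda>(i,j). if j < d then B $$ (i,j) else s $ i))"
proof -
  let ?B2 = "mat n (Suc d) (\<lambda>(i,j). if j < d then B $$ (i,j) else s $ i)"
  have B: "B \<in> carrier_mat n d" using g unfolding goodB_def by simp
  have sc: "s \<in> carrier_vec n" using S s unfolding cvec_subspace_def by auto
  have Sadd: "\<And>x y. x \<in> S \<Longrightarrow> y \<in> S \<Longrightarrow> x + y \<in> S"
    and Ssm: "\<And>a x. x \<in> S \<Longrightarrow> a \<cdot>\<^sub>v x \<in> S" using S unfolding cvec_subspace_def by auto
  have inS: "?B2 *\<^sub>v c2 \<in> S" if c2: "c2 \<in> carrier_vec (Suc d)" for c2
    unfolding ext_mult[OF B sc c2]
    using g s Sadd Ssm unfolding goodB_def by simp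
  have inj: "c2 = 0\<^sub>v (Suc d)" if c2: "c2 \<in> carrier_vec (Suc d)" and z: "?B2 *\<^sub>v c2 = 0\<^sub>v n" for c2
  proof -
    let ?c = "vec d (\<lambda>i. c2 $ i)"
    have z2: "B *\<^sub>v ?c + c2 $ d \<cdot>\<^sub>v s = 0\<^sub>v n" using z ext_mult[OF B sc c2] by simp
    have cd: "c2 $ d = 0"
    proof (rule ccontr)
      assume ne: "c2 $ d \<noteq> 0"
      have "s = B *\<^sub>v ((- 1 / c2 $ d) \<cdot>\<^sub>v ?c)"
      proof (rule eq_vecI)
        fix i assume "i < dim_vec (B *\<^sub>v ((- 1 / c2 $ d) \<cdot>\<^sub>v ?c))"
        hence i: "i < n" using B by simp
        have "(B *\<^sub>v ?c) $ i + c2 $ d * s $ i = 0"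
          using arg_cong[OF z2, of "\<lambda>v. v $ i"] i B sc by simp
        moreover have "(B *\<^sub>v ((- 1 / c2 $ d) \<cdot>\<^sub>v ?c)) $ i = (- 1 / c2 $ d) * (B *\<^sub>v ?c) $ i"
          using B i by (simp add: mult_mat_vec)
        ultimately show "s $ i = (B *\<^sub>v ((- 1 / c2 $ d) \<cdot>\<^sub>v ?c)) $ i"
          using ne aux_solve by simp
      qed (use B sc in simp)
      moreover have "(- 1 / c2 $ d) \<cdot>\<^sub>v ?c \<in> carrier_vec d" by simp
      ultimately show False using nr by blast
    qed
    have e: "(0::complex) \<cdot>\<^sub>v s = 0\<^sub>v n" using sc by (auto intro!: eq_vecI)
    have "B *\<^sub>v ?c \<in> carrier_vec n" using B by simp
    hence "B *\<^sub>v ?c = 0\<^sub>v n" using z2 cd e by simp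
    hence "?c = 0\<^sub>v d" using g unfolding goodB_def by auto
    show ?thesis
    proof (rule eq_vecI)
      fix i assume "i < dim_vec (0\<^sub>v (Suc d) :: complex vec)"
      hence "i < Suc d" by simp
      then consider "i < d" | "i = d" by linarith
      thus "c2 $ i = 0\<^sub>v (Suc d) $ i"
      proof cases
        case 1 thus ?thesis using arg_cong[OF \<open>?c = 0\<^sub>v d\<close>, of "\<lambda>v. v $ i"] by simp
      next
        case 2 thus ?thesis using cd by simp
      qed
    qed (use c2 in simp)
  qed
  show ?thesis unfolding goodB_def using inS inj by auto
qed

lemma basis_exists:
  assumes S: "cvec_subspace n S"
  shows "\<exists>d B. goodB n S d B \<and> (\<forall>s\<in>S. \<exists>c\<in>carrier_vec d. s = B *\<^sub>v c)"
proof -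
  let ?D = "{d. \<exists>B. goodB n S d B}"
  have z: "0\<^sub>m n 0 *\<^sub>v c = 0\<^sub>v n" if "c \<in> carrier_vec 0" for c :: "complex vec"
    by (rule eq_vecI) (use that in \<open>auto simp: mult_mat_vec_def scalar_prod_def\<close>)
  have "goodB n S 0 (0\<^sub>m n 0)"
    using S z unfolding goodB_def cvec_subspace_def by auto
  hence D0: "0 \<in> ?D" by blast
  have Db: "?D \<subseteq> {..n}" using inj_bound unfolding goodB_def by blast
  hence fin: "finite ?D" by (rule finite_subset) simp
  define d where "d = Max ?D"
  have "d \<in> ?D" unfolding d_def using fin D0 by (intro Max_in) auto
  then obtain B where g: "goodB n S d B" by blast
  have "\<forall>s\<in>S. \<exists>c\<in>carrier_vec d. s = B *\<^sub>v c"
  proof (rule ccontr)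
    assume "\<not> ?thesis"
    then obtain s where "s \<in> S" "\<not> (\<exists>c\<in>carrier_vec d. s = B *\<^sub>v c)" by blast
    from goodB_extend[OF S g this] have "Suc d \<in> ?D" by blast
    hence "Suc d \<le> d" unfolding d_def by (rule Max_ge[OF fin])
    thus False by simp
  qed
  with g show ?thesis by blast
qed

lemma cscalar_identity:
  fixes B :: "complex mat"
  assumes B: "B \<in> carrier_mat n d" and c: "c \<in> carrier_vec d"
  shows "(B *\<^sub>v c) \<bullet>c (B *\<^sub>v c) = c \<bullet>c (mat d n (\<lambda>(j,i). cnj (B $$ (i,j))) *\<^sub>v (B *\<^sub>v c))"
proof -
  define w where "w = B *\<^sub>v c"
  have w: "w \<in> carrier_vec n" using B c unfolding w_def by simp
  have wi: "w $ i = (\<Sum>j = 0..<d. B $$ (i,j) * c $ j)" if "i < n" for i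
    using that B c unfolding w_def by (auto simp: mult_mat_vec_def scalar_prod_def intro!: sum.cong)
  have "c \<bullet>c (mat d n (\<lambda>(j,i). cnj (B $$ (i,j))) *\<^sub>v w)
     = (\<Sum>j = 0..<d. c $ j * cnj (\<Sum>i = 0..<n. cnj (B $$ (i,j)) * w $ i))"
    using w c by (auto simp: mult_mat_vec_def scalar_prod_def intro!: sum.cong)
  also have "\<dots> = (\<Sum>j = 0..<d. \<Sum>i = 0..<n. c $ j * B $$ (i,j) * cnj (w $ i))"
    by (simp add: sum_distrib_left mult_ac)
  also have "\<dots> = (\<Sum>i = 0..<n. \<Sum>j = 0..<d. c $ j * B $$ (i,j) * cnj (w $ i))"
    by (rule sum.swap)
  also have "\<dots> = (\<Sum>i = 0..<n. w $ i * cnj (w $ i))"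
    by (rule sum.cong) (auto simp: wi sum_distrib_right mult_ac)
  also have "\<dots> = w \<bullet>c w" using w by (simp add: scalar_prod_def)
  finally show ?thesis unfolding w_def by simp
qed

lemma left_inv:
  fixes B :: "complex mat"
  assumes B: "B \<in> carrier_mat n d"
    and inj: "\<forall>c\<in>carrier_vec d. B *\<^sub>v c = 0\<^sub>v n \<longrightarrow> c = 0\<^sub>v d"
  shows "\<exists>L\<in>carrier_mat d n. L * B = 1\<^sub>m d"
proof -
  define A where "A = mat d n (\<lambda>(j,i). cnj (B $$ (i,j)))"
  have A: "A \<in> carrier_mat d n" unfolding A_def by simp
  have M: "A * B \<in> carrier_mat d d" using A B by simp
  have "det (A * B) \<noteq> 0"
  proof
    assume "det (A * B) = 0"
    then obtain c where c: "c \<in> carrier_vec d" "c \<noteq> 0\<^sub>v d" "(A * B) *\<^sub>v c = 0\<^sub>v d"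
      using det_0_iff_vec_prod_zero[OF M] by auto
    have "A *\<^sub>v (B *\<^sub>v c) = (A * B) *\<^sub>v c" using c A B by (simp add: assoc_mult_mat_vec)
    hence "A *\<^sub>v (B *\<^sub>v c) = 0\<^sub>v d" using c by simp
    hence "(B *\<^sub>v c) \<bullet>c (B *\<^sub>v c) = 0"
      using cscalar_identity[OF B c(1)] c(1) unfolding A_def by simp
    hence "B *\<^sub>v c = 0\<^sub>v n" using B c(1) conjugate_square_eq_0_vec[of "B *\<^sub>v c" n] by simp
    thus False using inj c by blast
  qed
  from det_non_zero_imp_unit[OF M this, of undefined]
  obtain Mi where Mi: "Mi \<in> carrier_mat d d" "Mi * (A * B) = 1\<^sub>m d"
    unfolding Units_def ring_mat_def by auto
  have "(Mi * A) * B = 1\<^sub>m d" using Mi A B by (simp add: assoc_mult_mat[of _ d d _ n _ d])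
  moreover have "Mi * A \<in> carrier_mat d n" using Mi A by simp
  ultimately show ?thesis by blast
qed

lemma BL_fix:
  fixes B L :: "complex mat"
  assumes B: "B \<in> carrier_mat n d" and L: "L \<in> carrier_mat d n" and LB: "L * B = 1\<^sub>m d"
    and onto: "\<forall>t\<in>T. \<exists>c\<in>carrier_vec d. t = B *\<^sub>v c" and t: "t \<in> T"
  shows "B *\<^sub>v (L *\<^sub>v t) = t"
proof -
  obtain c where c: "c \<in> carrier_vec d" "t = B *\<^sub>v c" using onto t by blast
  have "L *\<^sub>v t = (L * B) *\<^sub>v c" using c L B by simp
  also have "\<dots> = c" using LB c by simp
  finally show ?thesis using c by simp
qed

lemma col_in_range:
  fixes B :: "complex mat"
  assumes B: "B \<in> carrier_mat n d" and j: "j < d"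
  shows "col B j = B *\<^sub>v unit_vec d j"
  by (rule eq_vecI) (use B j in \<open>auto simp: mult_mat_vec_def\<close>)

lemma restrict_rep:
  fixes B L :: "complex mat"
  assumes rep: "is_rep G n \<rho>"
    and st: "G_stable G \<rho> T"
    and B: "B \<in> carrier_mat n d" and L: "L \<in> carrier_mat d n" and LB: "L * B = 1\<^sub>m d"
    and rng: "\<forall>c\<in>carrier_vec d. B *\<^sub>v c \<in> T"
    and onto: "\<forall>t\<in>T. \<exists>c\<in>carrier_vec d. t = B *\<^sub>v c"
  shows "is_rep G d (\<lambda>g. L * \<rho> g * B)"
    and "\<And>g (x::complex vec). g \<in> carrier G \<Longrightarrow> x \<in> carrier_vec d \<Longrightarrow>
           ((L * \<rho> g * B) *\<^sub>v x = x) \<longleftrightarrow> (\<rho> g *\<^sub>v (B *\<^sub>v x) = B *\<^sub>v x)"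
proof -
  have rc: "\<rho> g \<in> carrier_mat n n" if "g \<in> carrier G" for g
    using rep that unfolding is_rep_def by auto
  have fixT: "B *\<^sub>v (L *\<^sub>v t) = t" if "t \<in> T" for t
    using BL_fix[OF B L LB onto that] .
  have BLX: "B * (L * (\<rho> g * B)) = \<rho> g * B" if g: "g \<in> carrier G" for g
  proof (rule mat_col_eqI)
    fix j assume "j < dim_col (\<rho> g * B)"
    hence j: "j < d" using B by simp
    have X: "L * (\<rho> g * B) \<in> carrier_mat d d" using B L rc[OF g] by simp
    have X2: "\<rho> g * B \<in> carrier_mat n d" using B rc[OF g] by simp
    have "col (B * (L * (\<rho> g * B))) j = B *\<^sub>v (L *\<^sub>v (\<rho> g *\<^sub>v col B j))"
      using col_mult2[OF B X j] col_mult2[OF L X2 j] col_mult2[OF rc[OF g] B j] by simp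
    also have "col B j = B *\<^sub>v unit_vec d j" using col_in_range[OF B j] .
    also have "\<rho> g *\<^sub>v (B *\<^sub>v unit_vec d j) \<in> T"
      using st g rng unfolding G_stable_def by simp
    hence "B *\<^sub>v (L *\<^sub>v (\<rho> g *\<^sub>v (B *\<^sub>v unit_vec d j))) = \<rho> g *\<^sub>v (B *\<^sub>v unit_vec d j)"
      by (rule fixT)
    also have "\<rho> g *\<^sub>v (B *\<^sub>v unit_vec d j) = col (\<rho> g * B) j"
      using col_in_range[OF B j] col_mult2[OF rc[OF g] B j] by simp
    finally show "col (B * (L * (\<rho> g * B))) j = col (\<rho> g * B) j" .
  qed (use B L rc[OF g] in auto)
  show "is_rep G d (\<lambda>g. L * \<rho> g * B)"
    unfolding is_rep_def
  proof (intro conjI ballI)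
    fix g assume "g \<in> carrier G"
    thus "L * \<rho> g * B \<in> carrier_mat d d" using L B rc by auto
  next
    show "L * \<rho> \<one>\<^bsub>G\<^esub> * B = 1\<^sub>m d" using rep L B LB unfolding is_rep_def by simp
  next
    fix g h assume g: "g \<in> carrier G" and h: "h \<in> carrier G"
    note rg = rc[OF g] and rh = rc[OF h]
    have Y: "L * (\<rho> h * B) \<in> carrier_mat d d" using L rh B by simp
    have "L * \<rho> (g \<otimes>\<^bsub>G\<^esub> h) * B = L * (\<rho> g * \<rho> h) * B"
      using rep g h unfolding is_rep_def by simp
    also have "\<dots> = L * ((\<rho> g * \<rho> h) * B)"
      by (rule assoc_mult_mat[OF L _ B]) (use rg rh in simp)
    also have "(\<rho> g * \<rho> h) * B = \<rho> g * (\<rho> h * B)"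
      by (rule assoc_mult_mat[OF rg rh B])
    also have "\<rho> h * B = B * (L * (\<rho> h * B))" using BLX[OF h] by simp
    also have "L * (\<rho> g * (B * (L * (\<rho> h * B)))) = (L * \<rho> g) * (B * (L * (\<rho> h * B)))"
      by (rule assoc_mult_mat[symmetric, OF L rg, of _ d]) (use B Y in simp)
    also have "\<dots> = ((L * \<rho> g) * B) * (L * (\<rho> h * B))"
      by (rule assoc_mult_mat[symmetric, of _ d n _ d _ d]) (use L rg B Y in auto)
    also have "L * (\<rho> h * B) = L * \<rho> h * B"
      by (rule assoc_mult_mat[symmetric, OF L rh B])
    finally show "L * \<rho> (g \<otimes>\<^bsub>G\<^esub> h) * B = (L * \<rho> g * B) * (L * \<rho> h * B)" .
  qed
next
  fix g and x :: "complex vec" assume g: "g \<in> carrier G" and x: "x \<in> carrier_vec d"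
  have rc: "\<rho> g \<in> carrier_mat n n" using rep g unfolding is_rep_def by auto
  have LR: "L * \<rho> g \<in> carrier_mat d n" using L rc by simp
  have Bx: "B *\<^sub>v x \<in> carrier_vec n" using B x by simp
  have e1: "(L * \<rho> g * B) *\<^sub>v x = L *\<^sub>v (\<rho> g *\<^sub>v (B *\<^sub>v x))"
    using assoc_mult_mat_vec[OF LR B x] assoc_mult_mat_vec[OF L rc Bx] by simp
  have inT: "\<rho> g *\<^sub>v (B *\<^sub>v x) \<in> T" using st g rng x unfolding G_stable_def by simp
  have e2: "B *\<^sub>v (L *\<^sub>v (\<rho> g *\<^sub>v (B *\<^sub>v x))) = \<rho> g *\<^sub>v (B *\<^sub>v x)"
    using BL_fix[OF B L LB onto inT] .
  have e3: "L *\<^sub>v (B *\<^sub>v x) = x" using L B LB x by (simp add: assoc_mult_mat_vec[symmetric, of L d n B d x])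
  show "((L * \<rho> g * B) *\<^sub>v x = x) \<longleftrightarrow> (\<rho> g *\<^sub>v (B *\<^sub>v x) = B *\<^sub>v x)"
  proof
    assume "(L * \<rho> g * B) *\<^sub>v x = x"
    thus "\<rho> g *\<^sub>v (B *\<^sub>v x) = B *\<^sub>v x" using e1 e2 by metis
  next
    assume "\<rho> g *\<^sub>v (B *\<^sub>v x) = B *\<^sub>v x"
    thus "(L * \<rho> g * B) *\<^sub>v x = x" using e1 e3 by simp
  qed
qed

lemma reduce:
  assumes rep: "is_rep G n \<rho>" and T: "cvec_subspace n T" and st: "G_stable G \<rho> T"
    and Tne: "T \<noteq> carrier_vec n" and t: "t \<in> T"
    and HG: "H \<subseteq> carrier G" and KG: "K \<subseteq> carrier G"
    and tK: "\<forall>k\<in>K. \<rho> k *\<^sub>v t = t" and tH: "\<not> (\<forall>h\<in>H. \<rho> h *\<^sub>v t = t)"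
  shows "\<exists>d<n. \<exists>\<sigma>. is_rep G d \<sigma> \<and> (\<exists>x. x \<in> fixed_space d \<sigma> K \<and> x \<notin> fixed_space d \<sigma> H)"
proof -
  obtain d B where g: "goodB n T d B" and onto: "\<forall>s\<in>T. \<exists>c\<in>carrier_vec d. s = B *\<^sub>v c"
    using basis_exists[OF T] by blast
  have B: "B \<in> carrier_mat n d" and rng: "\<forall>c\<in>carrier_vec d. B *\<^sub>v c \<in> T"
    and inj: "\<forall>c\<in>carrier_vec d. B *\<^sub>v c = 0\<^sub>v n \<longrightarrow> c = 0\<^sub>v d"
    using g unfolding goodB_def by auto
  obtain L where L: "L \<in> carrier_mat d n" and LB: "L * B = 1\<^sub>m d"
    using left_inv[OF B inj] by blast
  have dn: "d \<le> n" using inj_bound[OF B inj] .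
  have "d \<noteq> n"
  proof
    assume dn: "d = n"
    have BL: "B * L = 1\<^sub>m n"
      using mat_mult_left_right_inverse[of L n B] L B LB dn by simp
    have "carrier_vec n \<subseteq> T"
    proof
      fix w :: "complex vec" assume w: "w \<in> carrier_vec n"
      have "B *\<^sub>v (L *\<^sub>v w) = (B * L) *\<^sub>v w" using B L w by simp
      also have "\<dots> = w" using BL w by simp
      finally have "w = B *\<^sub>v (L *\<^sub>v w)" by simp
      moreover have "L *\<^sub>v w \<in> carrier_vec d" using L w by simp
      ultimately show "w \<in> T" using rng by metis
    qed
    moreover have "T \<subseteq> carrier_vec n" using T unfolding cvec_subspace_def by simp
    ultimately show False using Tne by blast
  qed
  with dn have dlt: "d < n" by simp
  define \<sigma> where "\<sigma> = (\<lambda>g. L * \<rho> g * B)"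
  have rep': "is_rep G d \<sigma>" unfolding \<sigma>_def by (rule restrict_rep(1)[OF rep st B L LB rng onto])
  have eqv: "\<And>g x. g \<in> carrier G \<Longrightarrow> x \<in> carrier_vec d \<Longrightarrow>
           (\<sigma> g *\<^sub>v x = x) \<longleftrightarrow> (\<rho> g *\<^sub>v (B *\<^sub>v x) = B *\<^sub>v x)"
    unfolding \<sigma>_def by (rule restrict_rep(2)[OF rep st B L LB rng onto])
  define x where "x = L *\<^sub>v t"
  have x: "x \<in> carrier_vec d" unfolding x_def using L T t unfolding cvec_subspace_def by auto
  have Bx: "B *\<^sub>v x = t" unfolding x_def by (rule BL_fix[OF B L LB onto t])
  have "x \<in> fixed_space d \<sigma> K"
    unfolding fixed_space_def using x tK KG eqv Bx by auto
  moreover have "x \<notin> fixed_space d \<sigma> H"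
    unfolding fixed_space_def using x tH HG eqv Bx by auto
  ultimately show ?thesis using dlt rep' by blast
qed

definition vs :: "nat \<Rightarrow> ('a \<Rightarrow> complex vec) \<Rightarrow> 'a set \<Rightarrow> complex vec" where
  "vs n f A = vec n (\<lambda>i. \<Sum>a\<in>A. f a $ i)"

lemma vs_carrier[simp]: "vs n f A \<in> carrier_vec n" unfolding vs_def by simp

lemma mat_vs:
  fixes X :: "complex mat"
  assumes X: "X \<in> carrier_mat m n" and f: "\<forall>a\<in>A. f a \<in> carrier_vec n"
  shows "X *\<^sub>v vs n f A = vs m (\<lambda>a. X *\<^sub>v f a) A"
proof (rule eq_vecI)
  fix i assume "i < dim_vec (vs m (\<lambda>a. X *\<^sub>v f a) A)"
  hence i: "i < m" by (simp add: vs_def)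
  have "(X *\<^sub>v vs n f A) $ i = (\<Sum>k = 0..<n. X $$ (i,k) * (\<Sum>a\<in>A. f a $ k))"
    using X i by (auto simp: mult_mat_vec_def scalar_prod_def vs_def intro!: sum.cong)
  also have "\<dots> = (\<Sum>a\<in>A. \<Sum>k = 0..<n. X $$ (i,k) * f a $ k)"
    by (simp add: sum_distrib_left sum.swap[of _ _ A])
  also have "\<dots> = (\<Sum>a\<in>A. (X *\<^sub>v f a) $ i)"
    using X i f by (auto simp: mult_mat_vec_def scalar_prod_def intro!: sum.cong)
  also have "\<dots> = vs m (\<lambda>a. X *\<^sub>v f a) A $ i" using i by (simp add: vs_def)
  finally show "(X *\<^sub>v vs n f A) $ i = vs m (\<lambda>a. X *\<^sub>v f a) A $ i" .
qed (use X in \<open>simp add: vs_def\<close>)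

lemma vs_in:
  assumes S: "cvec_subspace n S" and fin: "finite A" and f: "\<forall>a\<in>A. f a \<in> S"
  shows "vs n f A \<in> S"
  using fin f
proof (induction A rule: finite_induct)
  case empty
  have "vs n f {} = 0\<^sub>v n" by (auto simp: vs_def)
  thus ?case using S unfolding cvec_subspace_def by simp
next
  case (insert a A)
  have fa: "f a \<in> S" and IH: "vs n f A \<in> S" using insert by auto
  have fc: "f a \<in> carrier_vec n" using fa S unfolding cvec_subspace_def by auto
  have "vs n f (insert a A) = f a + vs n f A"
    using insert(1,2) fc by (auto simp: vs_def)
  thus ?case using fa IH S unfolding cvec_subspace_def by simp
qed

lemma vs_const:
  assumes s: "s \<in> carrier_vec n" and f: "\<forall>a\<in>A. f a = s"
  shows "vs n f A = of_nat (card A) \<cdot>\<^sub>v s"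
  by (rule eq_vecI) (use s f in \<open>auto simp: vs_def\<close>)

lemma vs_reindex:
  assumes b: "bij_betw \<phi> A A"
  shows "vs n (\<lambda>a. f (\<phi> a)) A = vs n f A"
  unfolding vs_def
proof -
  have "\<And>i. (\<Sum>a\<in>A. f (\<phi> a) $ i) = (\<Sum>a\<in>A. f a $ i)"
    using sum.reindex_bij_betw[OF b, of "\<lambda>a. f a $ _"] by simp
  thus "vec n (\<lambda>i. \<Sum>a\<in>A. f (\<phi> a) $ i) = vec n (\<lambda>i. \<Sum>a\<in>A. f a $ i)" by simp
qed

definition msum :: "nat \<Rightarrow> ('a \<Rightarrow> complex mat) \<Rightarrow> 'a set \<Rightarrow> complex mat" where
  "msum n F A = mat n n (\<lambda>(i,j). \<Sum>a\<in>A. F a $$ (i,j))"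

lemma msum_carrier[simp]: "msum n F A \<in> carrier_mat n n" unfolding msum_def by simp

lemma msum_vec:
  assumes F: "\<forall>a\<in>A. F a \<in> carrier_mat n n" and w: "w \<in> carrier_vec n"
  shows "msum n F A *\<^sub>v w = vs n (\<lambda>a. F a *\<^sub>v w) A"
proof (rule eq_vecI)
  fix i assume "i < dim_vec (vs n (\<lambda>a. F a *\<^sub>v w) A)"
  hence i: "i < n" by (simp add: vs_def)
  have "(msum n F A *\<^sub>v w) $ i = (\<Sum>k = 0..<n. (\<Sum>a\<in>A. F a $$ (i,k)) * w $ k)"
    using w i by (auto simp: mult_mat_vec_def scalar_prod_def msum_def intro!: sum.cong)
  also have "\<dots> = (\<Sum>a\<in>A. \<Sum>k = 0..<n. F a $$ (i,k) * w $ k)"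
    by (simp add: sum_distrib_right sum.swap[of _ _ A])
  also have "\<dots> = (\<Sum>a\<in>A. (F a *\<^sub>v w) $ i)"
    using F i w by (auto simp: mult_mat_vec_def scalar_prod_def intro!: sum.cong)
  also have "\<dots> = vs n (\<lambda>a. F a *\<^sub>v w) A $ i" using i by (simp add: vs_def)
  finally show "(msum n F A *\<^sub>v w) $ i = vs n (\<lambda>a. F a *\<^sub>v w) A $ i" .
qed (simp add: vs_def msum_def)

lemma group_mult_bij:
  assumes grp: "group G" and h: "h \<in> carrier G"
  shows "bij_betw (\<lambda>g. h \<otimes>\<^bsub>G\<^esub> g) (carrier G) (carrier G)"
proof -
  interpret group G by (rule grp)
  show ?thesis
    by (rule bij_betw_byWitness[where f' = "\<lambda>g. inv\<^bsub>G\<^esub> h \<otimes>\<^bsub>G\<^esub> g"])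
       (use h in \<open>auto simp: m_assoc[symmetric]\<close>)
qed

lemma mult_zero_vec_mat:
  fixes A :: "complex mat"
  assumes "A \<in> carrier_mat m n" shows "A *\<^sub>v 0\<^sub>v n = 0\<^sub>v m"
  by (rule eq_vecI) (use assms in auto)

lemma vs_cong: "(\<And>a. a \<in> A \<Longrightarrow> f a = g a) \<Longrightarrow> vs n f A = vs n g A"
  unfolding vs_def by (auto intro!: sum.cong)

lemma maschke:
  assumes grp: "group G" and fin: "finite (carrier G)" and rep: "is_rep G n \<rho>"
    and S: "cvec_subspace n S" and st: "G_stable G \<rho> S"
    and Sne0: "S \<noteq> {0\<^sub>v n}" and Sne: "S \<noteq> carrier_vec n"
    and v: "v \<in> carrier_vec n" and vK: "\<forall>k\<in>K. \<rho> k *\<^sub>v v = v"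
    and vH: "\<not> (\<forall>h\<in>H. \<rho> h *\<^sub>v v = v)" and KG: "K \<subseteq> carrier G" and HG: "H \<subseteq> carrier G"
  shows "\<exists>T t. cvec_subspace n T \<and> G_stable G \<rho> T \<and> T \<noteq> carrier_vec n \<and> t \<in> T \<and>
           (\<forall>k\<in>K. \<rho> k *\<^sub>v t = t) \<and> \<not> (\<forall>h\<in>H. \<rho> h *\<^sub>v t = t)"
proof -
  have rc: "\<And>g. g \<in> carrier G \<Longrightarrow> \<rho> g \<in> carrier_mat n n"
    and rone: "\<rho> \<one>\<^bsub>G\<^esub> = 1\<^sub>m n"
    and rmul: "\<And>g h. g \<in> carrier G \<Longrightarrow> h \<in> carrier G \<Longrightarrow> \<rho> (g \<otimes>\<^bsub>G\<^esub> h) = \<rho> g * \<rho> h"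
    using rep unfolding is_rep_def by auto
  have Sc: "S \<subseteq> carrier_vec n" and S0: "0\<^sub>v n \<in> S"
    and Sadd: "\<And>x y. x \<in> S \<Longrightarrow> y \<in> S \<Longrightarrow> x + y \<in> S"
    and Ssm: "\<And>a x. x \<in> S \<Longrightarrow> a \<cdot>\<^sub>v x \<in> S" using S unfolding cvec_subspace_def by auto
  have Sst: "\<And>g x. g \<in> carrier G \<Longrightarrow> x \<in> S \<Longrightarrow> \<rho> g *\<^sub>v x \<in> S"
    using st unfolding G_stable_def by auto
  have invc: "\<And>g. g \<in> carrier G \<Longrightarrow> inv\<^bsub>G\<^esub> g \<in> carrier G"
    using grp by (simp add: group.inv_closed)
  obtain d B where g: "goodB n S d B" and onto: "\<forall>s\<in>S. \<exists>c\<in>carrier_vec d. s = B *\<^sub>v c"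
    using basis_exists[OF S] by blast
  have B: "B \<in> carrier_mat n d" and rng: "\<forall>c\<in>carrier_vec d. B *\<^sub>v c \<in> S"
    and inj: "\<forall>c\<in>carrier_vec d. B *\<^sub>v c = 0\<^sub>v n \<longrightarrow> c = 0\<^sub>v d"
    using g unfolding goodB_def by auto
  obtain L where L: "L \<in> carrier_mat d n" and LB: "L * B = 1\<^sub>m d"
    using left_inv[OF B inj] by blast
  define P0 where "P0 = B * L"
  have P0c: "P0 \<in> carrier_mat n n" unfolding P0_def using B L by simp
  have P0S: "P0 *\<^sub>v w \<in> S" if w: "w \<in> carrier_vec n" for w
  proof -
    have "P0 *\<^sub>v w = B *\<^sub>v (L *\<^sub>v w)" unfolding P0_def using assoc_mult_mat_vec[OF B L w] .
    moreover have "L *\<^sub>v w \<in> carrier_vec d" using L w by simp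
    ultimately show ?thesis using rng by simp
  qed
  have P0fix: "P0 *\<^sub>v s = s" if s: "s \<in> S" for s
  proof -
    have sc: "s \<in> carrier_vec n" using s Sc by auto
    have "P0 *\<^sub>v s = B *\<^sub>v (L *\<^sub>v s)" unfolding P0_def using assoc_mult_mat_vec[OF B L sc] .
    also have "\<dots> = s" by (rule BL_fix[OF B L LB onto s])
    finally show ?thesis .
  qed
  define F where "F = (\<lambda>g. \<rho> g * P0 * \<rho> (inv\<^bsub>G\<^esub> g))"
  have Fc: "F g \<in> carrier_mat n n" if "g \<in> carrier G" for g
    unfolding F_def using rc[OF that] rc[OF invc[OF that]] P0c by simp
  have Fvec: "F g *\<^sub>v w = \<rho> g *\<^sub>v (P0 *\<^sub>v (\<rho> (inv\<^bsub>G\<^esub> g) *\<^sub>v w))"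
    if gc: "g \<in> carrier G" and w: "w \<in> carrier_vec n" for g w
  proof -
    have a: "\<rho> g * P0 \<in> carrier_mat n n" using rc[OF gc] P0c by simp
    have b: "\<rho> (inv\<^bsub>G\<^esub> g) *\<^sub>v w \<in> carrier_vec n" using rc[OF invc[OF gc]] w by simp
    show ?thesis unfolding F_def
      using assoc_mult_mat_vec[OF a rc[OF invc[OF gc]] w] assoc_mult_mat_vec[OF rc[OF gc] P0c b] by simp
  qed
  have rinv: "\<rho> g *\<^sub>v (\<rho> (inv\<^bsub>G\<^esub> g) *\<^sub>v w) = w" if gc: "g \<in> carrier G" and w: "w \<in> carrier_vec n" for g w
  proof -
    have "\<rho> g *\<^sub>v (\<rho> (inv\<^bsub>G\<^esub> g) *\<^sub>v w) = (\<rho> g * \<rho> (inv\<^bsub>G\<^esub> g)) *\<^sub>v w"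
      using assoc_mult_mat_vec[OF rc[OF gc] rc[OF invc[OF gc]] w] by simp
    also have "\<rho> g * \<rho> (inv\<^bsub>G\<^esub> g) = \<rho> \<one>\<^bsub>G\<^esub>"
      using rmul[OF gc invc[OF gc]] grp gc by (simp add: group.r_inv)
    finally show ?thesis using rone w by simp
  qed
  have FS: "F g *\<^sub>v s = s" if gc: "g \<in> carrier G" and s: "s \<in> S" for g s
  proof -
    have sc: "s \<in> carrier_vec n" using s Sc by auto
    have "\<rho> (inv\<^bsub>G\<^esub> g) *\<^sub>v s \<in> S" using Sst[OF invc[OF gc] s] .
    hence "P0 *\<^sub>v (\<rho> (inv\<^bsub>G\<^esub> g) *\<^sub>v s) = \<rho> (inv\<^bsub>G\<^esub> g) *\<^sub>v s" by (rule P0fix)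
    thus ?thesis using Fvec[OF gc sc] rinv[OF gc sc] by simp
  qed
  have Fin: "F g *\<^sub>v w \<in> S" if gc: "g \<in> carrier G" and w: "w \<in> carrier_vec n" for g w
  proof -
    have "P0 *\<^sub>v (\<rho> (inv\<^bsub>G\<^esub> g) *\<^sub>v w) \<in> S" using P0S rc[OF invc[OF gc]] w by simp
    thus ?thesis using Fvec[OF gc w] Sst[OF gc] by simp
  qed
  define M where "M = msum n F (carrier G)"
  have Mc: "M \<in> carrier_mat n n" unfolding M_def by simp
  have Mvec: "M *\<^sub>v w = vs n (\<lambda>g. F g *\<^sub>v w) (carrier G)" if w: "w \<in> carrier_vec n" for w
    unfolding M_def by (rule msum_vec) (use Fc w in auto)
  have MS: "M *\<^sub>v w \<in> S" if w: "w \<in> carrier_vec n" for w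
    unfolding Mvec[OF w] by (rule vs_in[OF S fin]) (use Fin w in auto)
  define N where "N = (of_nat (card (carrier G)) :: complex)"
  have Nne: "N \<noteq> 0"
  proof -
    have "\<one>\<^bsub>G\<^esub> \<in> carrier G" using grp by (simp add: group.is_monoid monoid.one_closed)
    hence "card (carrier G) > 0" using fin by (auto simp: card_gt_0_iff)
    thus ?thesis unfolding N_def by simp
  qed
  have Ms: "M *\<^sub>v s = N \<cdot>\<^sub>v s" if s: "s \<in> S" for s
  proof -
    have sc: "s \<in> carrier_vec n" using s Sc by auto
    show ?thesis unfolding Mvec[OF sc] N_def by (rule vs_const[OF sc]) (use FS s in auto)
  qed
  have Mcomm: "\<rho> h *\<^sub>v (M *\<^sub>v w) = M *\<^sub>v (\<rho> h *\<^sub>v w)" if hc: "h \<in> carrier G" and w: "w \<in> carrier_vec n" for h w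
  proof -
    have hw: "\<rho> h *\<^sub>v w \<in> carrier_vec n" using rc[OF hc] w by simp
    have "\<rho> h *\<^sub>v (M *\<^sub>v w) = vs n (\<lambda>g. \<rho> h *\<^sub>v (F g *\<^sub>v w)) (carrier G)"
      unfolding Mvec[OF w] by (rule mat_vs[OF rc[OF hc]]) (use Fc w in \<open>auto intro: mult_mat_vec_carrier\<close>)
    also have "\<dots> = vs n (\<lambda>g. F (h \<otimes>\<^bsub>G\<^esub> g) *\<^sub>v (\<rho> h *\<^sub>v w)) (carrier G)"
    proof (rule vs_cong)
      fix g assume gc: "g \<in> carrier G"
      have hg: "h \<otimes>\<^bsub>G\<^esub> g \<in> carrier G" using grp hc gc by (simp add: group.is_monoid monoid.m_closed)
      define y where "y = P0 *\<^sub>v (\<rho> (inv\<^bsub>G\<^esub> g) *\<^sub>v w)"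
      have y: "y \<in> carrier_vec n" unfolding y_def using P0c rc[OF invc[OF gc]] w by simp
      have "\<rho> h *\<^sub>v (F g *\<^sub>v w) = \<rho> h *\<^sub>v (\<rho> g *\<^sub>v y)" unfolding y_def using Fvec[OF gc w] by simp
      also have "\<dots> = \<rho> (h \<otimes>\<^bsub>G\<^esub> g) *\<^sub>v y"
        using assoc_mult_mat_vec[OF rc[OF hc] rc[OF gc] y] rmul[OF hc gc] by simp
      finally have l: "\<rho> h *\<^sub>v (F g *\<^sub>v w) = \<rho> (h \<otimes>\<^bsub>G\<^esub> g) *\<^sub>v y" .
      have ie: "inv\<^bsub>G\<^esub> (h \<otimes>\<^bsub>G\<^esub> g) \<otimes>\<^bsub>G\<^esub> h = inv\<^bsub>G\<^esub> g"
        using grp hc gc by (simp add: group.inv_mult_group group.inv_closed monoid.m_assoc group.is_monoid group.l_inv monoid.r_one)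
      have "\<rho> (inv\<^bsub>G\<^esub> (h \<otimes>\<^bsub>G\<^esub> g)) *\<^sub>v (\<rho> h *\<^sub>v w) = (\<rho> (inv\<^bsub>G\<^esub> (h \<otimes>\<^bsub>G\<^esub> g)) * \<rho> h) *\<^sub>v w"
        using assoc_mult_mat_vec[OF rc[OF invc[OF hg]] rc[OF hc] w] by simp
      also have "\<dots> = \<rho> (inv\<^bsub>G\<^esub> g) *\<^sub>v w" using rmul[OF invc[OF hg] hc] ie by simp
      finally have r: "\<rho> (inv\<^bsub>G\<^esub> (h \<otimes>\<^bsub>G\<^esub> g)) *\<^sub>v (\<rho> h *\<^sub>v w) = \<rho> (inv\<^bsub>G\<^esub> g) *\<^sub>v w" .
      show "\<rho> h *\<^sub>v (F g *\<^sub>v w) = F (h \<otimes>\<^bsub>G\<^esub> g) *\<^sub>v (\<rho> h *\<^sub>v w)"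
        using l Fvec[OF hg hw] r unfolding y_def by simp
    qed
    also have "\<dots> = vs n (\<lambda>g. F g *\<^sub>v (\<rho> h *\<^sub>v w)) (carrier G)"
      by (rule vs_reindex[OF group_mult_bij[OF grp hc], of n "\<lambda>g. F g *\<^sub>v (\<rho> h *\<^sub>v w)"])
    also have "\<dots> = M *\<^sub>v (\<rho> h *\<^sub>v w)" using Mvec[OF hw] by simp
    finally show ?thesis .
  qed
  define s where "s = (1 / N) \<cdot>\<^sub>v (M *\<^sub>v v)"
  have sS: "s \<in> S" unfolding s_def using MS[OF v] Ssm by simp
  have sc: "s \<in> carrier_vec n" using sS Sc by auto
  define s' where "s' = v - s"
  have s'c: "s' \<in> carrier_vec n" unfolding s'_def using v sc by simp
  have Mv: "M *\<^sub>v v \<in> carrier_vec n" using Mc v by simp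
  have Msv: "M *\<^sub>v s = M *\<^sub>v v"
  proof -
    have "M *\<^sub>v s = (1 / N) \<cdot>\<^sub>v (M *\<^sub>v (M *\<^sub>v v))" unfolding s_def by (rule mult_mat_vec[OF Mc Mv])
    also have "\<dots> = (1 / N) \<cdot>\<^sub>v (N \<cdot>\<^sub>v (M *\<^sub>v v))" using Ms[OF MS[OF v]] by simp
    also have "\<dots> = M *\<^sub>v v" using Nne by (simp add: smult_smult_assoc)
    finally show ?thesis .
  qed
  define S' where "S' = {w \<in> carrier_vec n. M *\<^sub>v w = 0\<^sub>v n}"
  have s'S': "s' \<in> S'"
  proof -
    have "M *\<^sub>v s' = M *\<^sub>v v - M *\<^sub>v s" unfolding s'_def by (rule mult_minus_distrib_mat_vec[OF Mc v sc])
    also have "\<dots> = 0\<^sub>v n" using Msv Mv by simp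
    finally show ?thesis unfolding S'_def using s'c by simp
  qed
  have S'sub: "cvec_subspace n S'"
    unfolding cvec_subspace_def
  proof (intro conjI ballI allI)
    show "S' \<subseteq> carrier_vec n" unfolding S'_def by auto
    show "0\<^sub>v n \<in> S'" unfolding S'_def using mult_zero_vec_mat[OF Mc] by simp
  next
    fix x y assume x: "x \<in> S'" and y: "y \<in> S'"
    hence xc: "x \<in> carrier_vec n" and yc: "y \<in> carrier_vec n" unfolding S'_def by auto
    have "M *\<^sub>v (x + y) = M *\<^sub>v x + M *\<^sub>v y" by (rule mult_add_distrib_mat_vec[OF Mc xc yc])
    thus "x + y \<in> S'" using x y xc yc unfolding S'_def by simp
  next
    fix a x assume x: "x \<in> S'"
    hence xc: "x \<in> carrier_vec n" unfolding S'_def by auto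
    have "M *\<^sub>v (a \<cdot>\<^sub>v x) = a \<cdot>\<^sub>v (M *\<^sub>v x)" by (rule mult_mat_vec[OF Mc xc])
    also have "\<dots> = 0\<^sub>v n" using x unfolding S'_def by (auto intro!: eq_vecI)
    finally show "a \<cdot>\<^sub>v x \<in> S'" using xc unfolding S'_def by simp
  qed
  have S'st: "G_stable G \<rho> S'"
    unfolding G_stable_def
  proof (intro ballI)
    fix g x assume gc: "g \<in> carrier G" and x: "x \<in> S'"
    hence xc: "x \<in> carrier_vec n" unfolding S'_def by auto
    have "M *\<^sub>v (\<rho> g *\<^sub>v x) = \<rho> g *\<^sub>v (M *\<^sub>v x)" using Mcomm[OF gc xc] by simp
    also have "\<dots> = 0\<^sub>v n" using x mult_zero_vec_mat[OF rc[OF gc]] unfolding S'_def by simp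
    finally show "\<rho> g *\<^sub>v x \<in> S'" unfolding S'_def using rc[OF gc] xc by simp
  qed
  have S'ne: "S' \<noteq> carrier_vec n"
  proof
    assume eq: "S' = carrier_vec n"
    obtain s0 where s0: "s0 \<in> S" "s0 \<noteq> 0\<^sub>v n" using Sne0 S0 by blast
    have s0c: "s0 \<in> carrier_vec n" using s0 Sc by auto
    hence "M *\<^sub>v s0 = 0\<^sub>v n" using eq unfolding S'_def by blast
    hence "N \<cdot>\<^sub>v s0 = 0\<^sub>v n" using Ms[OF s0(1)] by simp
    hence "s0 = 0\<^sub>v n"
    proof -
      assume h: "N \<cdot>\<^sub>v s0 = 0\<^sub>v n"
      show "s0 = 0\<^sub>v n"
      proof (rule eq_vecI)
        fix i assume "i < dim_vec (0\<^sub>v n :: complex vec)"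
        hence i: "i < n" by simp
        have "N * s0 $ i = 0" using arg_cong[OF h, of "\<lambda>x. x $ i"] i s0c by simp
        thus "s0 $ i = 0\<^sub>v n $ i" using Nne i by simp
      qed (use s0c in simp)
    qed
    thus False using s0 by simp
  qed
  have sK: "\<rho> k *\<^sub>v s = s" if kK: "k \<in> K" for k
  proof -
    have kc: "k \<in> carrier G" using kK KG by auto
    have "\<rho> k *\<^sub>v s = (1 / N) \<cdot>\<^sub>v (\<rho> k *\<^sub>v (M *\<^sub>v v))" unfolding s_def by (rule mult_mat_vec[OF rc[OF kc] Mv])
    also have "\<rho> k *\<^sub>v (M *\<^sub>v v) = M *\<^sub>v v" using Mcomm[OF kc v] vK kK by simp
    finally show ?thesis unfolding s_def .
  qed
  have s'K: "\<rho> k *\<^sub>v s' = s'" if kK: "k \<in> K" for k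
  proof -
    have kc: "k \<in> carrier G" using kK KG by auto
    have "\<rho> k *\<^sub>v s' = \<rho> k *\<^sub>v v - \<rho> k *\<^sub>v s" unfolding s'_def by (rule mult_minus_distrib_mat_vec[OF rc[OF kc] v sc])
    thus ?thesis using sK[OF kK] vK kK unfolding s'_def by simp
  qed
  have vss: "v = s + s'" unfolding s'_def by (rule eq_vecI) (use v sc in auto)
  have "\<not> (\<forall>h\<in>H. \<rho> h *\<^sub>v s = s) \<or> \<not> (\<forall>h\<in>H. \<rho> h *\<^sub>v s' = s')"
  proof (rule ccontr)
    assume "\<not> ?thesis"
    hence a: "\<forall>h\<in>H. \<rho> h *\<^sub>v s = s" and b: "\<forall>h\<in>H. \<rho> h *\<^sub>v s' = s'" by auto
    obtain h where hH: "h \<in> H" and hv: "\<rho> h *\<^sub>v v \<noteq> v" using vH by blast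
    have "\<rho> h *\<^sub>v v = \<rho> h *\<^sub>v s + \<rho> h *\<^sub>v s'"
      using vss mult_add_distrib_mat_vec[OF rc[of h] sc s'c] hH HG by auto
    thus False using a b hH hv vss by simp
  qed
  thus ?thesis
  proof
    assume "\<not> (\<forall>h\<in>H. \<rho> h *\<^sub>v s = s)"
    thus ?thesis using S st Sne sS sK by blast
  next
    assume "\<not> (\<forall>h\<in>H. \<rho> h *\<^sub>v s' = s')"
    thus ?thesis using S'sub S'st S'ne s'S' s'K by blast
  qed
qed

lemma main_ind:
  assumes grp: "group G" and fin: "finite (carrier G)"
    and HG: "H \<subseteq> carrier G" and KG: "K \<subseteq> carrier G"
  shows "is_rep G n \<rho> \<Longrightarrow> v \<in> fixed_space n \<rho> K \<Longrightarrow> v \<notin> fixed_space n \<rho> H \<Longrightarrow>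
    \<exists>m \<sigma>. simple_rep G m \<sigma> \<and> fixed_space m \<sigma> H \<noteq> fixed_space m \<sigma> K"
proof (induction n arbitrary: \<rho> v rule: less_induct)
  case (less n)
  show ?case
  proof (cases "simple_rep G n \<rho>")
    case True thus ?thesis using less.prems by blast
  next
    case False
    have vc: "v \<in> carrier_vec n" and vK: "\<forall>k\<in>K. \<rho> k *\<^sub>v v = v"
      using less.prems(2) unfolding fixed_space_def by auto
    have vH: "\<not> (\<forall>h\<in>H. \<rho> h *\<^sub>v v = v)" using less.prems(3) vc unfolding fixed_space_def by auto
    have rc: "\<And>g. g \<in> carrier G \<Longrightarrow> \<rho> g \<in> carrier_mat n n" using less.prems(1) unfolding is_rep_def by auto
    have npos: "n > 0"
    proof (rule ccontr)
      assume "\<not> n > 0"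
      hence n0: "n = 0" by simp
      have "\<forall>h\<in>H. \<rho> h *\<^sub>v v = v"
      proof
        fix h assume "h \<in> H"
        hence "\<rho> h \<in> carrier_mat 0 0" using rc HG n0 by auto
        hence hv0: "\<rho> h *\<^sub>v v \<in> carrier_vec 0" using vc n0 mult_mat_vec_carrier by blast
        show "\<rho> h *\<^sub>v v = v"
          by (intro eq_vecI) (use carrier_vecD[OF hv0] carrier_vecD[OF vc] n0 in auto)
      qed
      thus False using vH by simp
    qed
    obtain S where S: "cvec_subspace n S" "G_stable G \<rho> S" "S \<noteq> {0\<^sub>v n}" "S \<noteq> carrier_vec n"
      using False less.prems(1) npos unfolding simple_rep_def by blast
    obtain T t where T: "cvec_subspace n T" "G_stable G \<rho> T" "T \<noteq> carrier_vec n" "t \<in> T"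
      and tK: "\<forall>k\<in>K. \<rho> k *\<^sub>v t = t" and tH: "\<not> (\<forall>h\<in>H. \<rho> h *\<^sub>v t = t)"
      using maschke[OF grp fin less.prems(1) S vc vK vH KG HG] by blast
    obtain d \<sigma> x where d: "d < n" and rep': "is_rep G d \<sigma>"
      and x: "x \<in> fixed_space d \<sigma> K" "x \<notin> fixed_space d \<sigma> H"
      using reduce[OF less.prems(1) T HG KG tK tH] by blast
    show ?thesis by (rule less.IH[OF d rep' x])
  qed
qed

lemma regular:
  assumes grp: "group G" and fin: "finite (carrier G)" and K: "subgroup K G"
    and h: "h \<in> carrier G" and hK: "h \<notin> K"
  shows "\<exists>N \<rho> v. is_rep G N \<rho> \<and> v \<in> fixed_space N \<rho> K \<and> \<rho> h *\<^sub>v v \<noteq> v"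
proof -
  interpret group G by (rule grp)
  define N where "N = card (carrier G)"
  obtain e where e: "bij_betw e {0..<N} (carrier G)"
    using ex_bij_betw_nat_finite[OF fin] unfolding N_def by blast
  have ec: "\<And>i. i < N \<Longrightarrow> e i \<in> carrier G" using e unfolding bij_betw_def by auto
  have einj: "\<And>i j. i < N \<Longrightarrow> j < N \<Longrightarrow> e i = e j \<Longrightarrow> i = j"
    using e unfolding bij_betw_def inj_on_def by auto
  have esurj: "\<And>x. x \<in> carrier G \<Longrightarrow> \<exists>i<N. e i = x"
    using e unfolding bij_betw_def by (metis atLeastLessThan_iff imageE)
  have sum1: "(\<Sum>k = 0..<N. if e k = y then f k else 0) = f (THE k. k < N \<and> e k = y)"
    if y: "y \<in> carrier G" for y and f :: "nat \<Rightarrow> complex"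
  proof -
    obtain k0 where k0: "k0 < N" "e k0 = y" using esurj[OF y] by blast
    have the: "(THE k. k < N \<and> e k = y) = k0" using k0 einj by blast
    have "(\<Sum>k = 0..<N. if e k = y then f k else 0) = (\<Sum>k = 0..<N. if k = k0 then f k else 0)"
      by (rule sum.cong) (use k0 einj in auto)
    also have "\<dots> = f k0" using k0 by simp
    finally show ?thesis using the by simp
  qed
  define \<rho> where "\<rho> = (\<lambda>g. mat N N (\<lambda>(i,j). if e i = g \<otimes>\<^bsub>G\<^esub> e j then (1::complex) else 0))"
  have rep: "is_rep G N \<rho>"
    unfolding is_rep_def
  proof (intro conjI ballI)
    fix g assume "g \<in> carrier G" thus "\<rho> g \<in> carrier_mat N N" unfolding \<rho>_def by simp
  next
    show "\<rho> \<one>\<^bsub>G\<^esub> = 1\<^sub>m N"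
      by (rule eq_matI) (use ec einj in \<open>auto simp: \<rho>_def\<close>)
  next
    fix g k assume g: "g \<in> carrier G" and k: "k \<in> carrier G"
    show "\<rho> (g \<otimes>\<^bsub>G\<^esub> k) = \<rho> g * \<rho> k"
    proof (rule eq_matI)
      fix i j assume i: "i < dim_row (\<rho> g * \<rho> k)" and j: "j < dim_col (\<rho> g * \<rho> k)"
      hence i: "i < N" and j: "j < N" unfolding \<rho>_def by auto
      have kej: "k \<otimes>\<^bsub>G\<^esub> e j \<in> carrier G" using k ec[OF j] by simp
      obtain l where l: "l < N" "e l = k \<otimes>\<^bsub>G\<^esub> e j" using esurj[OF kej] by blast
      have "(\<rho> g * \<rho> k) $$ (i,j) = (\<Sum>m = 0..<N. (if e i = g \<otimes>\<^bsub>G\<^esub> e m then 1 else 0) * (if e m = k \<otimes>\<^bsub>G\<^esub> e j then 1 else 0))"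
        using i j unfolding \<rho>_def by (auto simp: scalar_prod_def intro!: sum.cong)
      also have "\<dots> = (\<Sum>m = 0..<N. if e m = k \<otimes>\<^bsub>G\<^esub> e j then (if e i = g \<otimes>\<^bsub>G\<^esub> e m then 1 else 0) else 0)"
        by (rule sum.cong) auto
      also have "\<dots> = (\<Sum>m = 0..<N. if m = l then (if e i = g \<otimes>\<^bsub>G\<^esub> e m then (1::complex) else 0) else 0)"
        by (rule sum.cong) (use l einj in auto)
      also have "\<dots> = (if e i = g \<otimes>\<^bsub>G\<^esub> (k \<otimes>\<^bsub>G\<^esub> e j) then 1 else 0)" using l by simp
      also have "\<dots> = \<rho> (g \<otimes>\<^bsub>G\<^esub> k) $$ (i,j)"
        using i j g k ec[OF j] unfolding \<rho>_def by (simp add: m_assoc)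
      finally show "\<rho> (g \<otimes>\<^bsub>G\<^esub> k) $$ (i,j) = (\<rho> g * \<rho> k) $$ (i,j)" by simp
    qed (auto simp: \<rho>_def)
  qed
  define v where "v = vec N (\<lambda>i. if e i \<in> K then (1::complex) else 0)"
  have rv: "(\<rho> g *\<^sub>v v) $ i = (if inv\<^bsub>G\<^esub> g \<otimes>\<^bsub>G\<^esub> e i \<in> K then 1 else 0)"
    if g: "g \<in> carrier G" and i: "i < N" for g i
  proof -
    have ge: "inv\<^bsub>G\<^esub> g \<otimes>\<^bsub>G\<^esub> e i \<in> carrier G" using g ec[OF i] by simp
    obtain l where l: "l < N" "e l = inv\<^bsub>G\<^esub> g \<otimes>\<^bsub>G\<^esub> e i" using esurj[OF ge] by blast
    have eq: "\<And>m. m < N \<Longrightarrow> (e i = g \<otimes>\<^bsub>G\<^esub> e m) = (m = l)"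
    proof -
      fix m assume m: "m < N"
      have "(e i = g \<otimes>\<^bsub>G\<^esub> e m) = (e m = inv\<^bsub>G\<^esub> g \<otimes>\<^bsub>G\<^esub> e i)"
        using g ec[OF i] ec[OF m] by (metis inv_solve_left)
      also have "\<dots> = (m = l)" using l m einj by metis
      finally show "(e i = g \<otimes>\<^bsub>G\<^esub> e m) = (m = l)" .
    qed
    have "(\<rho> g *\<^sub>v v) $ i = (\<Sum>m = 0..<N. (if e i = g \<otimes>\<^bsub>G\<^esub> e m then 1 else 0) * (if e m \<in> K then 1 else 0))"
      using i unfolding \<rho>_def v_def by (auto simp: mult_mat_vec_def scalar_prod_def intro!: sum.cong)
    also have "\<dots> = (\<Sum>m = 0..<N. if m = l then (if e m \<in> K then (1::complex) else 0) else 0)"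
      by (rule sum.cong) (use eq in auto)
    also have "\<dots> = (if inv\<^bsub>G\<^esub> g \<otimes>\<^bsub>G\<^esub> e i \<in> K then 1 else 0)" using l by simp
    finally show ?thesis .
  qed
  have vfix: "v \<in> fixed_space N \<rho> K"
    unfolding fixed_space_def
  proof (intro CollectI conjI ballI)
    show "v \<in> carrier_vec N" unfolding v_def by simp
  next
    fix k assume kK: "k \<in> K"
    have kc: "k \<in> carrier G" using K kK subgroup.subset by blast
    show "\<rho> k *\<^sub>v v = v"
    proof (rule eq_vecI)
      fix i assume "i < dim_vec v"
      hence i: "i < N" unfolding v_def by simp
      have "(inv\<^bsub>G\<^esub> k \<otimes>\<^bsub>G\<^esub> e i \<in> K) = (e i \<in> K)"
      proof
        assume "inv\<^bsub>G\<^esub> k \<otimes>\<^bsub>G\<^esub> e i \<in> K"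
        hence "k \<otimes>\<^bsub>G\<^esub> (inv\<^bsub>G\<^esub> k \<otimes>\<^bsub>G\<^esub> e i) \<in> K"
          by (rule subgroup.m_closed[OF K kK])
        moreover have "k \<otimes>\<^bsub>G\<^esub> (inv\<^bsub>G\<^esub> k \<otimes>\<^bsub>G\<^esub> e i) = e i"
          using kc ec[OF i] by (simp add: m_assoc[symmetric])
        ultimately show "e i \<in> K" by simp
      next
        assume "e i \<in> K"
        thus "inv\<^bsub>G\<^esub> k \<otimes>\<^bsub>G\<^esub> e i \<in> K"
          by (rule subgroup.m_closed[OF K subgroup.m_inv_closed[OF K kK]])
      qed
      thus "(\<rho> k *\<^sub>v v) $ i = v $ i" using rv[OF kc i] i unfolding v_def by simp
    qed (auto simp: \<rho>_def v_def)
  qed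
  obtain i where i: "i < N" "e i = h" using esurj[OF h] by blast
  have "inv\<^bsub>G\<^esub> h \<otimes>\<^bsub>G\<^esub> e i = \<one>\<^bsub>G\<^esub>" using i h by simp
  moreover have "\<one>\<^bsub>G\<^esub> \<in> K" by (rule subgroup.one_closed[OF K])
  ultimately have "(\<rho> h *\<^sub>v v) $ i = 1" using rv[OF h i(1)] by simp
  moreover have "v $ i = 0" using i hK unfolding v_def by simp
  ultimately have "\<rho> h *\<^sub>v v \<noteq> v" by auto
  thus ?thesis using rep vfix by blast
qed

theorem lemma3p2:
  fixes G :: "('g, 'b) monoid_scheme" and H K :: "'g set"
  assumes "group G" and "finite (carrier G)"
    and "subgroup H G" and "subgroup K G" and "H \<noteq> K"
  shows "\<exists>n \<rho>. simple_rep G n \<rho> \<and> fixed_space n \<rho> H \<noteq> fixed_space n \<rho> K"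
proof -
  have HG: "H \<subseteq> carrier G" and KG: "K \<subseteq> carrier G"
    using assms(3,4) subgroup.subset by blast+
  have gen: "\<exists>n \<rho>. simple_rep G n \<rho> \<and> fixed_space n \<rho> A \<noteq> fixed_space n \<rho> C"
    if A: "subgroup A G" and C: "subgroup C G" and h: "h \<in> A" "h \<notin> C" for A C h
  proof -
    have AG: "A \<subseteq> carrier G" and CG: "C \<subseteq> carrier G" using A C subgroup.subset by blast+
    obtain N \<rho> v where rep: "is_rep G N \<rho>" and vC: "v \<in> fixed_space N \<rho> C" and hv: "\<rho> h *\<^sub>v v \<noteq> v"
      using regular[OF assms(1,2) C _ h(2)] h(1) AG by blast
    have "v \<notin> fixed_space N \<rho> A" using hv h(1) unfolding fixed_space_def by auto
    thus ?thesis using main_ind[OF assms(1,2) AG CG rep vC] by blast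
  qed
  from assms(5) have "(\<exists>h. h \<in> H \<and> h \<notin> K) \<or> (\<exists>h. h \<in> K \<and> h \<notin> H)" by blast
  thus ?thesis
  proof
    assume "\<exists>h. h \<in> H \<and> h \<notin> K"
    thus ?thesis using gen[OF assms(3,4)] by blast
  next
    assume "\<exists>h. h \<in> K \<and> h \<notin> H"
    then obtain n \<rho> where "simple_rep G n \<rho>" "fixed_space n \<rho> K \<noteq> fixed_space n \<rho> H"
      using gen[OF assms(4,3)] by blast
    thus ?thesis by metis
  qed
qed

end
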